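(* Let $n\ge 3$ be an integer and let $\varphi$ be the automorphism of $F$ with $\varphi(x)=y$, $\varphi(y)=x$. Then $(\varphi(r_1),\varphi(r_2))\sim_{AC}(r_1,r_2)$, where $(r_1,r_2)=\mathrm{AK}(n)=(xyxy^{-1}x^{-1}y^{-1},\ x^ny^{-(n+1)})$.
   Context: $F=F(x,y)$ is the free group on $\{x,y\}$. The Akbulut–Kurby pair is $\mathrm{AK}(n)=(xyxy^{-1}x^{-1}y^{-1},\ x^{n}y^{-(n+1)})$, i.e. the presentation $\langle x,y\mid xyx=yxy,\ x^n=y^{n+1}\rangle$ of the trivial group. The Andrews–Curtis (AC) moves on a pair $(r_1,r_2)\in F^2$ are: replace $r_i$ by $r_ir_j$ ($i\ne j$); replace $r_i$ by $r_i^{-1}$; replace $r_i$ by $w^{-1}r_iw$ for some $w\in F$. Two pairs are AC-equivalent, $\sim_{AC}$, if one can be obtained from the other by a finite sequence of AC-moves. *)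

theory Defs
  imports Main
begin

text \<open>The free group F(x,y) on two generators, modelled by freely reduced words.
A letter is a pair (g, inverted): (X, False) is x, (X, True) is x^{-1}.\<close>

datatype gen = X | Y

type_synonym letter = "gen \<times> bool"
type_synonym word = "letter list"

definition inv_letter :: "letter \<Rightarrow> letter" where
  "inv_letter a = (fst a, \<not> snd a)"

fun reduced :: "word \<Rightarrow> bool" where
  "reduced [] = True"
| "reduced [a] = True"
| "reduced (a # b # w) = (b \<noteq> inv_letter a \<and> reduced (b # w))"

definition F :: "word set" where
  "F = {w. reduced w}"

fun push :: "letter \<Rightarrow> word \<Rightarrow> word" where
  "push a [] = [a]"
| "push a (b # w) = (if b = inv_letter a then w else a # b # w)"

definition reduce :: "word \<Rightarrow> word" where
  "reduce w = foldr push w []"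

definition fmult :: "word \<Rightarrow> word \<Rightarrow> word" where
  "fmult u v = reduce (u @ v)"

definition finv :: "word \<Rightarrow> word" where
  "finv w = rev (map inv_letter w)"

definition x :: word where "x = [(X, False)]"
definition y :: word where "y = [(Y, False)]"

definition fpow :: "word \<Rightarrow> nat \<Rightarrow> word" where
  "fpow w n = reduce (concat (replicate n w))"

definition AK1 :: word where
  "AK1 = fmult x (fmult y (fmult x (fmult (finv y) (fmult (finv x) (finv y)))))"

definition AK2 :: "nat \<Rightarrow> word" where
  "AK2 n = fmult (fpow x n) (finv (fpow y (n + 1)))"

definition swap_gen :: "gen \<Rightarrow> gen" where
  "swap_gen g = (case g of X \<Rightarrow> Y | Y \<Rightarrow> X)"

definition phi :: "word \<Rightarrow> word" where
  "phi w = reduce (map (\<lambda>(g, e). (swap_gen g, e)) w)"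

inductive ac_move :: "word \<times> word \<Rightarrow> word \<times> word \<Rightarrow> bool" where
  mult1: "ac_move (r1, r2) (fmult r1 r2, r2)"
| mult2: "ac_move (r1, r2) (r1, fmult r2 r1)"
| inv1: "ac_move (r1, r2) (finv r1, r2)"
| inv2: "ac_move (r1, r2) (r1, finv r2)"
| conj1: "w \<in> F \<Longrightarrow> ac_move (r1, r2) (fmult (finv w) (fmult r1 w), r2)"
| conj2: "w \<in> F \<Longrightarrow> ac_move (r1, r2) (r1, fmult (finv w) (fmult r2 w))"

definition ac_equiv :: "word \<times> word \<Rightarrow> word \<times> word \<Rightarrow> bool" where
  "ac_equiv p q = ac_move\<^sup>*\<^sup>* p q"

end

theory Submission
  imports Defs
begin

lemma inv_inv[simp]: "inv_letter (inv_letter a) = a"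
  by (simp add: inv_letter_def)

lemma inv_neq[simp]: "inv_letter a \<noteq> a" "a \<noteq> inv_letter a"
  by (auto simp: inv_letter_def prod_eq_iff)

lemma reduced_tl: "reduced (a#w) \<Longrightarrow> reduced w"
  by (cases w) auto

lemma reduced_push: "reduced w \<Longrightarrow> reduced (push a w)"
  by (cases w) (auto dest: reduced_tl)

lemma reduced_foldr: "reduced z \<Longrightarrow> reduced (foldr push u z)"
  by (induction u) (auto intro: reduced_push)

lemma reduced_reduce[simp]: "reduced (reduce w)"
  by (simp add: reduce_def reduced_foldr)

lemma reduce_Nil[simp]: "reduce [] = []"
  by (simp add: reduce_def)

lemma push_reduced: "reduced (a#w) \<Longrightarrow> push a w = a#w"
  by (cases w) auto

lemma reduce_Cons: "reduce (a#w) = push a (reduce w)"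
  by (simp add: reduce_def)

lemma reduce_id: "reduced w \<Longrightarrow> reduce w = w"
proof (induction w)
  case Nil then show ?case by (simp add: reduce_def)
next
  case (Cons a w)
  have "reduced w" using Cons.prems by (rule reduced_tl)
  with Cons show ?case by (simp add: reduce_Cons push_reduced)
qed

lemma push_cancel: "reduced z \<Longrightarrow> push a (push (inv_letter a) z) = z"
proof (cases z)
  case (Cons b z')
  assume r: "reduced z"
  show ?thesis
  proof (cases "b = a")
    case True
    then have "push (inv_letter a) z = z'" using Cons by simp
    moreover have "push a z' = a # z'" using r Cons True by (intro push_reduced) simp
    ultimately show ?thesis using Cons True by simp
  next
    case False
    then show ?thesis using Cons by auto
  qed
qed simp

lemma foldr_push_push:
  assumes "reduced w" "reduced z"
  shows "foldr push (push a w) z = push a (foldr push w z)"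
proof (cases w)
  case (Cons b w')
  show ?thesis
  proof (cases "b = inv_letter a")
    case True
    have "reduced (foldr push w' z)" using assms Cons by (intro reduced_foldr) 
    then show ?thesis using Cons True push_cancel by simp
  qed (use Cons in simp)
qed simp

lemma foldr_reduce: "reduced z \<Longrightarrow> foldr push (reduce u) z = foldr push u z"
  by (induction u) (simp_all add: reduce_Cons foldr_push_push)

lemma R1: "reduce (u @ v) = foldr push u (reduce v)"
  by (simp add: reduce_def)

lemma R5[simp]: "reduce (reduce u @ v) = reduce (u @ v)"
  by (simp add: R1 foldr_reduce)

lemma R6[simp]: "reduce (u @ reduce v) = reduce (u @ v)"
  by (simp add: R1 reduce_id)

lemma R6'[simp]: "reduce (a @ b @ reduce v) = reduce (a @ b @ v)"
  by (metis R6 append_assoc)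

lemma reduce_reduce[simp]: "reduce (reduce u) = reduce u"
  by (simp add: reduce_id)

lemma finv_Cons: "finv (a # u) = finv u @ [inv_letter a]"
  by (simp add: finv_def)

lemma finv_Nil[simp]: "finv [] = []"
  by (simp add: finv_def)

lemma finv_empty[simp]: "finv w = [] \<longleftrightarrow> w = []"
  by (simp add: finv_def)

lemma finv_finv[simp]: "finv (finv u) = u"
  by (simp add: finv_def rev_map comp_def)

lemma cancel: "reduce (u @ finv u @ z) = reduce z"
proof (induction u arbitrary: z)
  case Nil then show ?case by (simp add: finv_def)
next
  case (Cons a u)
  have "reduce ((a # u) @ finv (a # u) @ z) = push a (reduce (u @ finv u @ (inv_letter a # z)))"
    by (simp add: finv_Cons reduce_Cons)
  also have "\<dots> = reduce z" using Cons by (simp add: reduce_Cons push_cancel)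
  finally show ?case .
qed

lemma cancel2: "reduce (finv u @ u @ z) = reduce z"
  using cancel[of "finv u" z] by simp

lemma cancelp: "reduce (p @ u @ finv u @ z) = reduce (p @ z)"
  by (metis R1 cancel)

lemma cancelp2: "reduce (p @ finv u @ u @ z) = reduce (p @ z)"
  by (metis R1 cancel2)

lemma reduced_Cons_iff: "reduced (a#w) \<longleftrightarrow> reduced w \<and> (w \<noteq> [] \<longrightarrow> hd w \<noteq> inv_letter a)"
  by (cases w) auto

lemma reduced_snoc: "reduced (u @ [a]) \<longleftrightarrow> reduced u \<and> (u \<noteq> [] \<longrightarrow> a \<noteq> inv_letter (last u))"
proof (induction u)
  case (Cons b u)
  then show ?case by (cases u) (auto simp: reduced_Cons_iff)
qed simp

lemma last_finv: "w \<noteq> [] \<Longrightarrow> last (finv w) = inv_letter (hd w)"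
  by (cases w) (simp_all add: finv_def)

lemma reduced_finv: "reduced w \<Longrightarrow> reduced (finv w)"
proof (induction w)
  case Nil then show ?case by (simp add: finv_def)
next
  case (Cons a w)
  then show ?case
    by (auto simp: finv_Cons reduced_snoc reduced_Cons_iff last_finv)
qed

lemma ins_ac_red:
  assumes r: "reduced r" and q: "reduced q"
  shows "ac_move\<^sup>*\<^sup>* (r, reduce (p @ q)) (r, reduce (p @ r @ q))"
proof -
  define r' where "r' = fmult (finv q) (fmult r q)"
  have r'eq: "r' = reduce (finv q @ r @ q)" by (simp add: r'_def fmult_def)
  have qF: "q \<in> F" "finv q \<in> F" using q reduced_finv by (auto simp: F_def)
  have m1: "ac_move (r, reduce (p @ q)) (r', reduce (p @ q))"
    unfolding r'_def by (rule conj1[OF qF(1)])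
  have m2: "ac_move (r', reduce (p @ q)) (r', fmult (reduce (p @ q)) r')"
    by (rule mult2)
  have e2: "fmult (reduce (p @ q)) r' = reduce (p @ r @ q)"
    by (simp add: fmult_def r'eq cancelp2[where u="finv q", simplified])
  have m3: "ac_move (r', reduce (p @ r @ q)) (fmult (finv (finv q)) (fmult r' (finv q)), reduce (p @ r @ q))"
    by (rule conj1[OF qF(2)])
  have "fmult (finv (finv q)) (fmult r' (finv q)) = reduce (q @ finv q @ r @ q @ finv q)"
    by (simp add: fmult_def r'eq)
  also have "\<dots> = reduce (r @ q @ finv q @ [])" by (simp add: cancel)
  also have "\<dots> = r" using r cancelp[of r q "[]"] by (simp add: reduce_id)
  finally have e3: "fmult (finv (finv q)) (fmult r' (finv q)) = r" .
  have "ac_move\<^sup>*\<^sup>* (r', reduce (p @ r @ q)) (r, reduce (p @ r @ q))"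
    using m3 e3 by simp
  then have "ac_move\<^sup>*\<^sup>* (r', reduce (p @ q)) (r, reduce (p @ r @ q))"
    using m2 e2 by (simp add: converse_rtranclp_into_rtranclp)
  then show ?thesis using m1 by (simp add: converse_rtranclp_into_rtranclp)
qed

lemma ins_ac:
  assumes r: "reduced r"
  shows "ac_move\<^sup>*\<^sup>* (r, reduce (p @ q)) (r, reduce (p @ r @ q))"
proof -
  have "ac_move\<^sup>*\<^sup>* (r, reduce (p @ reduce q)) (r, reduce ((p @ r) @ reduce q))"
    using ins_ac_red[OF r, of "reduce q" p] by simp
  then show ?thesis by simp
qed

inductive step :: "word \<Rightarrow> word \<Rightarrow> word \<Rightarrow> bool" for r where
  red: "reduce u = reduce v \<Longrightarrow> step r u v"
| ins: "step r (p @ q) (p @ r @ q)"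
| insi: "step r (p @ q) (p @ finv r @ q)"

definition eqv where "eqv r = (step r)\<^sup>*\<^sup>*"

lemma step_ac:
  assumes "step r u v" "reduced r"
  shows "ac_move\<^sup>*\<^sup>* (r, reduce u) (r, reduce v)"
  using assms(1)
proof cases
  case (red) then show ?thesis by simp
next
  case (ins p q) then show ?thesis using ins_ac[OF assms(2)] by simp
next
  case (insi p q)
  have rf: "reduced (finv r)" using assms(2) by (rule reduced_finv)
  have a: "ac_move (r, reduce (p @ q)) (finv r, reduce (p @ q))" by (rule inv1)
  have b: "ac_move\<^sup>*\<^sup>* (finv r, reduce (p @ q)) (finv r, reduce (p @ finv r @ q))"
    by (rule ins_ac[OF rf])
  have c: "ac_move (finv r, reduce (p @ finv r @ q)) (finv (finv r), reduce (p @ finv r @ q))" by (rule inv1)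
  show ?thesis using a b c insi by (simp add: converse_rtranclp_into_rtranclp rtranclp.rtrancl_into_rtrancl)
qed

lemma eqv_ac:
  assumes "eqv r u v" "reduced r"
  shows "ac_move\<^sup>*\<^sup>* (r, reduce u) (r, reduce v)"
  using assms(1) unfolding eqv_def
proof (induction rule: rtranclp_induct)
  case (step y z)
  then show ?case using step_ac[OF step(2) assms(2)] rtranclp_trans by metis
qed simp

lemma step_cong: "step r u v \<Longrightarrow> step r (a @ u @ b) (a @ v @ b)"
proof (induction rule: step.induct)
  case (red u v)
  then have "reduce (u @ b) = reduce (v @ b)" by (metis R5)
  then have "reduce (a @ u @ b) = reduce (a @ v @ b)" by (simp add: R1)
  then show ?case by (rule step.red)
next
  case (ins p q)
  then show ?case using step.ins[of r "a @ p" "q @ b"] by simp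
next
  case (insi p q)
  then show ?case using step.insi[of r "a @ p" "q @ b"] by simp
qed

lemma eqv_cong1: "eqv r u v \<Longrightarrow> eqv r (a @ u @ b) (a @ v @ b)"
  unfolding eqv_def
  by (induction rule: rtranclp_induct) (auto intro: rtranclp.rtrancl_into_rtrancl step_cong)

lemma eqv_trans: "eqv r u v \<Longrightarrow> eqv r v w \<Longrightarrow> eqv r u w"
  unfolding eqv_def by (rule rtranclp_trans)

lemma eqv_app: "eqv r u1 v1 \<Longrightarrow> eqv r u2 v2 \<Longrightarrow> eqv r (u1 @ u2) (v1 @ v2)"
  using eqv_cong1[of r u1 v1 "[]" u2] eqv_cong1[of r u2 v2 v1 "[]"]
  by (auto intro: eqv_trans)

lemma eqv_red: "reduce u = reduce v \<Longrightarrow> eqv r u v"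
  unfolding eqv_def by (auto intro: step.red)

abbreviation "xl \<equiv> (X, False)"
abbreviation "xi \<equiv> (X, True)"
abbreviation "yl \<equiv> (Y, False)"
abbreviation "yi \<equiv> (Y, True)"

lemma AK1_val: "AK1 = [xl, yl, xl, yi, xi, yi]"
  by (simp add: AK1_def fmult_def reduce_def x_def y_def finv_def inv_letter_def)

definition sl :: "letter \<Rightarrow> letter" where "sl a = (swap_gen (fst a), snd a)"

lemma phi_sl: "phi w = reduce (map sl w)"
  unfolding phi_def sl_def by (simp add: case_prod_beta')

lemma phi_AK1: "phi AK1 = [yl, xl, yl, xi, yi, xi]"
  by (simp add: phi_sl AK1_val sl_def swap_gen_def reduce_def inv_letter_def)

lemma push_sl: "push (sl a) (map sl w) = map sl (push a w)"
  by (cases w) (auto simp: sl_def inv_letter_def swap_gen_def prod_eq_iff split: gen.splits)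

lemma reduce_sl: "reduce (map sl w) = map sl (reduce w)"
  by (induction w) (simp_all add: reduce_Cons push_sl reduce_def)

lemma reduced_rep: "reduced (replicate n a)"
  by (induction n) (auto simp: reduced_Cons_iff)

lemma reduced_rep': "reduced (a # replicate n a)"
  using reduced_rep[of "Suc n" a] by simp

lemma concat_rep: "concat (replicate n [a]) = replicate n a"
  by (induction n) auto

definition D :: word where "D = [xl, yl, xl]"

lemma L1: "eqv AK1 (finv D @ [yl] @ D) [xl]"
proof -
  have "step AK1 (finv D @ ([yl] @ D)) (finv D @ AK1 @ ([yl] @ D))" by (rule step.ins)
  then have "eqv AK1 (finv D @ [yl] @ D) (finv D @ AK1 @ [yl] @ D)" unfolding eqv_def by simp
  moreover have "eqv AK1 (finv D @ AK1 @ [yl] @ D) [xl]"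
    by (rule eqv_red) (simp add: AK1_val D_def finv_def reduce_def inv_letter_def)
  ultimately show ?thesis by (rule eqv_trans)
qed

lemma L2: "eqv AK1 (finv D @ [xi] @ D) [yi]"
proof -
  have "eqv AK1 (finv D @ [xi] @ D) ([xi, yi, xi] @ [yl, xl])"
    by (rule eqv_red) (simp add: D_def finv_def reduce_def inv_letter_def)
  moreover have "step AK1 ([xi, yi, xi] @ [yl, xl]) ([xi, yi, xi] @ AK1 @ [yl, xl])" by (rule step.ins)
  then have "eqv AK1 ([xi, yi, xi] @ [yl, xl]) ([xi, yi, xi] @ AK1 @ [yl, xl])" unfolding eqv_def by simp
  moreover have "eqv AK1 ([xi, yi, xi] @ AK1 @ [yl, xl]) [yi]"
    by (rule eqv_red) (simp add: AK1_val reduce_def inv_letter_def)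
  ultimately show ?thesis by (blast intro: eqv_trans)
qed

lemma LD: "set w \<subseteq> {yl, xi} \<Longrightarrow> eqv AK1 (finv D @ w @ D) (map sl w)"
proof (induction w)
  case Nil
  show ?case by (rule eqv_red) (simp add: cancel2[of D "[]", simplified])
next
  case (Cons a w)
  have IH: "eqv AK1 (finv D @ w @ D) (map sl w)" using Cons by simp
  have La: "eqv AK1 (finv D @ [a] @ D) [sl a]"
    using Cons.prems L1 L2 by (auto simp: sl_def swap_gen_def)
  have "eqv AK1 (finv D @ (a # w) @ D) ((finv D @ [a] @ D) @ (finv D @ w @ D))"
    by (rule eqv_red) (simp add: cancelp[of "finv D @ [a]" D, simplified])
  moreover have "eqv AK1 ((finv D @ [a] @ D) @ (finv D @ w @ D)) ([sl a] @ map sl w)"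
    by (rule eqv_app[OF La IH])
  ultimately show ?case by (auto intro: eqv_trans)
qed

theorem lemma4:
  fixes n :: nat
  assumes "n \<ge> 3"
  shows "ac_equiv (phi AK1, phi (AK2 n)) (AK1, AK2 n)"
proof -
  define A where "A = replicate n yl @ replicate (n+1) xi"
  define B where "B = replicate n xl @ replicate (n+1) yi"
  have mA: "map sl A = B" by (simp add: A_def B_def sl_def swap_gen_def)
  have mB: "map sl B = A" by (simp add: A_def B_def sl_def swap_gen_def)
  have AK2e: "AK2 n = reduce B"
    by (simp add: AK2_def fmult_def fpow_def concat_rep reduce_id reduced_rep x_def y_def
        reduced_rep' finv_def inv_letter_def B_def replicate_append_same)
  have phiAK2: "phi (AK2 n) = reduce A"
    by (metis AK2e phi_sl reduce_sl reduce_reduce mB)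
  have fphi: "finv (phi AK1) = AK1" unfolding phi_AK1 by (simp add: AK1_val finv_def inv_letter_def)
  have s1: "ac_move (phi AK1, reduce A) (AK1, reduce A)"
    using inv1[of "phi AK1" "reduce A"] fphi by simp
  have DF: "D \<in> F" by (simp add: F_def D_def inv_letter_def)
  have s2: "ac_move (AK1, reduce A) (AK1, reduce (finv D @ A @ D))"
    using conj2[OF DF, of AK1 "reduce A"] by (simp add: fmult_def)
  have sA: "set A \<subseteq> {yl, xi}" by (auto simp: A_def)
  have s3: "ac_move\<^sup>*\<^sup>* (AK1, reduce (finv D @ A @ D)) (AK1, reduce B)"
    using eqv_ac[OF LD[OF sA]] mA by (simp add: AK1_val inv_letter_def)
  have "ac_move\<^sup>*\<^sup>* (AK1, reduce A) (AK1, reduce B)"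
    using s2 s3 by (simp add: converse_rtranclp_into_rtranclp)
  then have "ac_move\<^sup>*\<^sup>* (phi AK1, reduce A) (AK1, reduce B)"
    using s1 by (simp add: converse_rtranclp_into_rtranclp)
  then show ?thesis unfolding ac_equiv_def using phiAK2 AK2e by simp
qed

end
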